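(* Let $k\ge\ell\ge 2$ be integers with $k+\ell\ge6$, let $G$ be a finite digraph, let $Z\subseteq V(G)$ with $|Z|\ge2$, and let $v\in V(G)\setminus Z$. Then $$\Pr[\phi\in\mathcal S \text{ and } \phi(I\cup O)\subseteq Z\mid \phi(c)=v]\le(1-\delta(Z))\,(\mu(Z)-\rho^-_Z(v))^k(\rho^-_Z(v))^\ell\le(1-\delta(Z))\,\lambda_0\,\mu(Z)^m.$$
   Context: Put $m=k+\ell$ and $\lambda_0=k^k\ell^\ell/m^m$. Digraphs are finite, without loops; $xy$ denotes an arc from $x$ to $y$; two vertices are adjacent if at least one of $xy,yx$ is an arc. The oriented star $S_{k,\ell}$ has a center $c$, a set $O$ of $k$ out-leaves and a set $I$ of $\ell$ in-leaves; its arcs are exactly $co$ ($o\in O$) and $ic$ ($i\in I$). For a digraph $G$ on $n$ vertices, let $\phi$ be a uniformly random map from $V(S_{k,\ell})$ to $V(G)$ (all $n^{m+1}$ maps equally likely), and let $\mathcal S$ be the set of maps $\phi$ that are isomorphisms from $S_{k,\ell}$ onto the induced subdigraph $G[\mathrm{Im}\,\phi]$ (in particular injective). For $A\subseteq V(G)$: $\mu(A)=|A|/n$; $N^-_A(x)$ is the set of in-neighbours of $x$ lying in $A$, and $\rho^-_A(x)=|N^-_A(x)|/n$. For $Z\subseteq V(G)$ with $|Z|\ge2$, $\delta(Z)$ is the number of adjacent unordered pairs of vertices of $Z$ divided by $\binom{|Z|}{2}$. *)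

theory Defs
  imports "HOL-Library.FuncSet" Complex_Main
begin

definition digraph :: "'a set \<Rightarrow> ('a \<times> 'a) set \<Rightarrow> bool" where
  "digraph V E \<longleftrightarrow> finite V \<and> E \<subseteq> V \<times> V \<and> (\<forall>x. (x, x) \<notin> E)"

datatype svert = Ctr | OutL nat | InL nat

definition star_verts :: "nat \<Rightarrow> nat \<Rightarrow> svert set" where
  "star_verts k l = {Ctr} \<union> OutL ` {..<k} \<union> InL ` {..<l}"

definition star_leaves :: "nat \<Rightarrow> nat \<Rightarrow> svert set" where
  "star_leaves k l = OutL ` {..<k} \<union> InL ` {..<l}"

definition star_arc :: "nat \<Rightarrow> nat \<Rightarrow> svert \<Rightarrow> svert \<Rightarrow> bool" where
  "star_arc k l x y \<longleftrightarrow>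
     (x = Ctr \<and> (\<exists>i<k. y = OutL i)) \<or> ((\<exists>i<l. x = InL i) \<and> y = Ctr)"

text \<open>phi is an isomorphism from S_{k,l} onto the induced subdigraph G[Im phi].\<close>
definition star_iso :: "nat \<Rightarrow> nat \<Rightarrow> ('a \<times> 'a) set \<Rightarrow> (svert \<Rightarrow> 'a) \<Rightarrow> bool" where
  "star_iso k l E phi \<longleftrightarrow> inj_on phi (star_verts k l) \<and>
     (\<forall>x\<in>star_verts k l. \<forall>y\<in>star_verts k l. (phi x, phi y) \<in> E \<longleftrightarrow> star_arc k l x y)"

text \<open>Pr[phi in S and phi(I \<union> O) \<subseteq> Z | phi(c) = v], phi uniform over all maps V(S) \<rightarrow> V.\<close>
definition cond_prob :: "nat \<Rightarrow> nat \<Rightarrow> 'a set \<Rightarrow> ('a \<times> 'a) set \<Rightarrow> 'a set \<Rightarrow> 'a \<Rightarrow> real" where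
  "cond_prob k l V E Z v =
     real (card {phi \<in> star_verts k l \<rightarrow>\<^sub>E V. phi Ctr = v \<and> star_iso k l E phi \<and> phi ` star_leaves k l \<subseteq> Z})
     / real (card {phi \<in> star_verts k l \<rightarrow>\<^sub>E V. phi Ctr = v})"

definition mu :: "'a set \<Rightarrow> 'a set \<Rightarrow> real" where
  "mu V A = real (card A) / real (card V)"

definition rho_in :: "'a set \<Rightarrow> ('a \<times> 'a) set \<Rightarrow> 'a set \<Rightarrow> 'a \<Rightarrow> real" where
  "rho_in V E A x = real (card {u \<in> A. (u, x) \<in> E}) / real (card V)"

definition density :: "('a \<times> 'a) set \<Rightarrow> 'a set \<Rightarrow> real" where
  "density E Z = real (card {{x, y} | x y. x \<in> Z \<and> y \<in> Z \<and> x \<noteq> y \<and> ((x, y) \<in> E \<or> (y, x) \<in> E)})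
     / real (card Z choose 2)"

definition lambda0 :: "nat \<Rightarrow> nat \<Rightarrow> real" where
  "lambda0 k l = real k ^ k * real l ^ l / real (k + l) ^ (k + l)"

end

theory Submission
  imports Defs "HOL-Analysis.Convex"
begin

lemma pair_count:
  assumes fin: "finite L" "\<And>i. i \<in> L \<Longrightarrow> finite (B i)"
    and xy: "x \<in> L" "y \<in> L" "x \<noteq> y" and R: "R \<subseteq> B x \<times> B y"
  shows "card {f \<in> Pi\<^sub>E L B. (f x, f y) \<in> R} \<le> card R * (\<Prod>i\<in>L - {x, y}. card (B i))"
proof -
  let ?S = "{f \<in> Pi\<^sub>E L B. (f x, f y) \<in> R}"
  let ?g = "\<lambda>f. ((f x, f y), restrict f (L - {x, y}))"
  have finR: "finite R" using R fin xy by (meson finite_SigmaI rev_finite_subset)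
  have inj: "inj_on ?g ?S"
  proof (rule inj_onI)
    fix f h assume f: "f \<in> ?S" and h: "h \<in> ?S" and eq: "?g f = ?g h"
    from eq have e1: "f x = h x" "f y = h y" and e2: "restrict f (L-{x,y}) = restrict h (L-{x,y})"
      by simp_all
    show "f = h"
    proof (rule ext)
      fix z
      show "f z = h z"
      proof (cases "z \<in> L")
        case True
        show ?thesis
        proof (cases "z = x \<or> z = y")
          case True then show ?thesis using e1 by blast
        next
          case False
          then have "z \<in> L - {x,y}" using \<open>z \<in> L\<close> by blast
          then show ?thesis using fun_cong[OF e2, of z] by simp
        qed
      next
        case False
        have "f \<in> Pi\<^sub>E L B" "h \<in> Pi\<^sub>E L B" using f h by simp_all
        then show ?thesis using False PiE_arb by metis
      qed
    qed
  qed
  have img: "?g ` ?S \<subseteq> R \<times> Pi\<^sub>E (L - {x, y}) B"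
  proof
    fix t assume "t \<in> ?g ` ?S"
    then obtain f where f: "f \<in> Pi\<^sub>E L B" "(f x, f y) \<in> R" and t: "t = ?g f" by blast
    have "restrict f (L - {x, y}) \<in> Pi\<^sub>E (L - {x, y}) B"
      using f(1) by (simp add: PiE_iff)
    then show "t \<in> R \<times> Pi\<^sub>E (L - {x, y}) B" using t f(2) by simp
  qed
  have finT: "finite (R \<times> Pi\<^sub>E (L - {x, y}) B)"
    using finR fin by (intro finite_cartesian_product finite_PiE) auto
  have "card ?S \<le> card (R \<times> Pi\<^sub>E (L - {x, y}) B)"
    by (rule card_inj_on_le[OF inj img finT])
  also have "\<dots> = card R * (\<Prod>i\<in>L - {x, y}. card (B i))"
    by (subst card_cartesian_product) (simp add: card_PiE fin(1))
  finally show ?thesis .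
qed

lemma prod_remove2:
  assumes "finite L" "x \<in> L" "y \<in> L" "x \<noteq> y"
  shows "(\<Prod>i\<in>L. g i) = g x * g y * (\<Prod>i\<in>L - {x, y}. (g i :: nat))"
proof -
  have "(\<Prod>i\<in>L. g i) = g x * (\<Prod>i\<in>L - {x}. g i)" by (rule prod.remove[OF assms(1,2)])
  moreover have "(\<Prod>i\<in>L - {x}. g i) = g y * (\<Prod>i\<in>L - {x} - {y}. g i)"
    by (rule prod.remove) (use assms in auto)
  moreover have "L - {x} - {y} = L - {x, y}" by blast
  ultimately show ?thesis by (simp add: mult.assoc)
qed

lemma prod_star:
  "(\<Prod>s\<in>star_verts k l. h s) = h Ctr * (\<Prod>i<k. h (OutL i)) * (\<Prod>i<l. (h (InL i) :: nat))"
proof -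
  have d1: "{Ctr} \<inter> OutL ` {..<k} = {}" by auto
  have d2: "({Ctr} \<union> OutL ` {..<k}) \<inter> InL ` {..<l} = {}" by auto
  have "(\<Prod>s\<in>star_verts k l. h s) = (\<Prod>s\<in>{Ctr} \<union> OutL ` {..<k}. h s) * (\<Prod>s\<in>InL ` {..<l}. h s)"
    unfolding star_verts_def by (rule prod.union_disjoint) (use d2 in auto)
  also have "(\<Prod>s\<in>{Ctr} \<union> OutL ` {..<k}. h s) = h Ctr * (\<Prod>s\<in>OutL ` {..<k}. h s)"
    by (subst prod.union_disjoint) (use d1 in auto)
  also have "(\<Prod>s\<in>OutL ` {..<k}. h s) = (\<Prod>i<k. h (OutL i))"
    by (subst prod.reindex) (auto simp: inj_on_def)
  also have "(\<Prod>s\<in>InL ` {..<l}. h s) = (\<Prod>i<l. h (InL i))"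
    by (subst prod.reindex) (auto simp: inj_on_def)
  finally show ?thesis .
qed

lemma finite_star_verts: "finite (star_verts k l)"
  by (simp add: star_verts_def)

lemma adj_count:
  assumes "finite Z"
  shows "2 * card {{x, y} | x y. x \<in> Z \<and> y \<in> Z \<and> x \<noteq> y \<and> ((x, y) \<in> E \<or> (y, x) \<in> E)}
     \<le> card {(x, y) \<in> Z \<times> Z. x \<noteq> y \<and> ((x, y) \<in> E \<or> (y, x) \<in> E)}"
proof -
  let ?U = "{{x, y} | x y. x \<in> Z \<and> y \<in> Z \<and> x \<noteq> y \<and> ((x, y) \<in> E \<or> (y, x) \<in> E)}"
  let ?AD = "{(x, y) \<in> Z \<times> Z. x \<noteq> y \<and> ((x, y) \<in> E \<or> (y, x) \<in> E)}"
  define A where "A S = {(x, y). x \<noteq> y \<and> {x, y} = S}" for S :: "'a set"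
  have "?AD \<subseteq> Z \<times> Z" by blast
  hence finAD: "finite ?AD" using assms finite_subset finite_cartesian_product by blast
  have finU: "finite ?U"
  proof -
    have "?U \<subseteq> Pow Z" by auto
    thus ?thesis using assms by (meson finite_Pow_iff finite_subset)
  qed
  have UN: "\<Union>(A ` ?U) = ?AD"
  proof
    show "\<Union>(A ` ?U) \<subseteq> ?AD"
    proof
      fix t assume "t \<in> \<Union>(A ` ?U)"
      then obtain S where S: "S \<in> ?U" "t \<in> A S" by blast
      from S(1) obtain x y where xy: "S = {x, y}" "x \<in> Z" "y \<in> Z" "x \<noteq> y" "(x, y) \<in> E \<or> (y, x) \<in> E"
        by blast
      from S(2) obtain x' y' where t: "t = (x', y')" "x' \<noteq> y'" "{x', y'} = S"
        unfolding A_def by blast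
      have t3: "{x', y'} = {x, y}" using t(3) xy(1) by simp
      from t3 have "(x' = x \<and> y' = y) \<or> (x' = y \<and> y' = x)" by (simp add: doubleton_eq_iff)
      then show "t \<in> ?AD" using t(1) xy(2-5) by blast
    qed
  next
    show "?AD \<subseteq> \<Union>(A ` ?U)"
    proof
      fix t assume "t \<in> ?AD"
      then obtain x y where t: "t = (x, y)" "x \<in> Z" "y \<in> Z" "x \<noteq> y" "(x, y) \<in> E \<or> (y, x) \<in> E"
        by blast
      then have "{x, y} \<in> ?U" by blast
      moreover have "t \<in> A {x, y}" using t by (simp add: A_def)
      ultimately show "t \<in> \<Union>(A ` ?U)" by blast
    qed
  qed
  have cardA: "card (A S) = 2" if "S \<in> ?U" for S
  proof -
    from that obtain x y where S: "S = {x, y}" "x \<noteq> y" by blast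
    have "A S = {(x, y), (y, x)}" using S by (auto simp: A_def doubleton_eq_iff)
    thus ?thesis using S by simp
  qed
  have "card ?AD = (\<Sum>S\<in>?U. card (A S))"
    unfolding UN[symmetric]
  proof (rule card_UN_disjoint[OF finU])
    show "\<forall>S\<in>?U. finite (A S)"
    proof
      fix S assume "S \<in> ?U"
      then have "card (A S) = 2" by (rule cardA)
      thus "finite (A S)" by (metis card.infinite zero_neq_numeral)
    qed
    have mem: "{fst t, snd t} = S" if "t \<in> A S" for t S
      using that by (cases t) (simp add: A_def)
    show "\<forall>i\<in>?U. \<forall>j\<in>?U. i \<noteq> j \<longrightarrow> A i \<inter> A j = {}"
    proof (intro ballI impI)
      fix i j :: "'a set" assume ij: "i \<noteq> j"
      show "A i \<inter> A j = {}"
      proof (rule equals0I)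
        fix t assume "t \<in> A i \<inter> A j"
        then have "{fst t, snd t} = i" "{fst t, snd t} = j" using mem by blast+
        then show False using ij by simp
      qed
    qed
  qed
  also have "\<dots> = (\<Sum>S\<in>?U. 2)" by (rule sum.cong) (simp_all add: cardA)
  finally show ?thesis by simp
qed

lemma offdiag_card:
  assumes "finite Z"
  shows "card {(x, y) \<in> Z \<times> Z. x \<noteq> y} = card Z * card Z - card Z"
proof -
  have eq: "{(x, y) \<in> Z \<times> Z. x \<noteq> y} = Z \<times> Z - (\<lambda>x. (x, x)) ` Z" by auto
  have "card ((\<lambda>x. (x, x)) ` Z) = card Z" by (rule card_image) (auto simp: inj_on_def)
  moreover have "card (Z \<times> Z - (\<lambda>x. (x, x)) ` Z) = card (Z \<times> Z) - card ((\<lambda>x. (x, x)) ` Z)"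
    by (rule card_Diff_subset) (use assms in auto)
  ultimately show ?thesis unfolding eq by (simp add: card_cartesian_product)
qed

lemma amgm2:
  fixes X Y :: real and k l :: nat
  assumes "X \<ge> 0" "Y \<ge> 0" "k > 0" "l > 0"
  shows "X ^ k * Y ^ l \<le> real k ^ k * real l ^ l / real (k + l) ^ (k + l) * (X + Y) ^ (k + l)"
proof -
  define m where "m = k + l"
  define x where "x i = (if i < k then X / k else Y / l)" for i
  have mpos: "m > 0" using assms by (simp add: m_def)
  have A: "{..<m} \<inter> {i. i < k} = {..<k}" by (auto simp: m_def)
  have B: "{..<m} \<inter> - {i. i < k} = {k..<m}" by (auto simp: m_def)
  have sumx: "(\<Sum>i\<in>{..<m}. x i / card {..<m}) = (X + Y) / m"
  proof -
    have "(\<Sum>i\<in>{..<m}. x i / card {..<m}) = (\<Sum>i\<in>{..<m}. x i) / m" by (simp add: sum_divide_distrib)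
    also have "(\<Sum>i\<in>{..<m}. x i) = X + Y"
      unfolding x_def sum.If_cases[OF finite_lessThan] A B using assms by (simp add: m_def)
    finally show ?thesis .
  qed
  have prodx: "(\<Prod>i\<in>{..<m}. x i) = (X/k)^k * (Y/l)^l"
    unfolding x_def prod.If_cases[OF finite_lessThan] A B by (simp add: m_def)
  have P0: "(X/k)^k * (Y/l)^l \<ge> 0" using assms by simp
  have "((X/k)^k * (Y/l)^l) powr (1 / m) \<le> (X + Y) / m"
  proof -
    have "(\<Sum>i \<in> {..<m}. x i / card {..<m}) \<ge> (\<Prod>i \<in> {..<m}. x i) powr (1 / card {..<m})"
      by (rule arith_geom_mean) (use mpos assms in \<open>auto simp: x_def\<close>)
    thus ?thesis using sumx prodx by simp
  qed
  hence "(((X/k)^k * (Y/l)^l) powr (1 / m)) ^ m \<le> ((X + Y) / m) ^ m"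
    by (intro power_mono) auto
  also have "(((X/k)^k * (Y/l)^l) powr (1 / m)) ^ m = (X/k)^k * (Y/l)^l"
  proof -
    let ?P = "(X/k)^k * (Y/l)^l"
    have "(?P powr (1 / m)) ^ m = (?P powr (1 / m)) powr (real m)"
      using mpos by (simp add: powr_realpow')
    also have "\<dots> = ?P powr 1" using mpos by (simp add: powr_powr)
    also have "\<dots> = ?P" using P0 by (simp add: powr_one)
    finally show ?thesis .
  qed
  finally have "(X/k)^k * (Y/l)^l \<le> ((X + Y) / m) ^ m" .
  thus ?thesis using assms
    by (simp add: m_def power_divide field_simps)
qed

theorem main_count:
  fixes k l :: nat and V :: "'a set" and E :: "('a \<times> 'a) set" and Z :: "'a set" and v :: 'a
  assumes "k \<ge> 2" "l \<ge> 2" "finite Z" "v \<notin> Z"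
  defines "N \<equiv> {u \<in> Z. (u, v) \<in> E}"
  defines "Valid \<equiv> {phi \<in> star_verts k l \<rightarrow>\<^sub>E V. phi Ctr = v \<and> star_iso k l E phi \<and> phi ` star_leaves k l \<subseteq> Z}"
  defines "NA \<equiv> {(x, y) \<in> Z \<times> Z. x \<noteq> y \<and> (x, y) \<notin> E \<and> (y, x) \<notin> E}"
  shows "card Valid * card Z ^ 2 \<le> card (Z - N) ^ k * card N ^ l * card NA"
proof -
  define P where "P = {u \<in> Z. (v, u) \<in> E \<and> (u, v) \<notin> E}"
  define Q where "Q = {u \<in> Z. (u, v) \<in> E \<and> (v, u) \<notin> E}"
  define SV where "SV = star_verts k l"
  define Bf where "Bf = (\<lambda>s. case s of Ctr \<Rightarrow> {v} | OutL i \<Rightarrow> P | InL i \<Rightarrow> Q)"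
  define p where "p = card P"
  define q where "q = card Q"
  define a where "a = card (Z - N)"
  define b where "b = card N"
  have finSV: "finite SV" by (simp add: SV_def star_verts_def)
  have finB: "finite (Bf s)" for s
    using assms(3) by (cases s) (auto simp: Bf_def P_def Q_def)
  have PZN: "P \<subseteq> Z - N" by (auto simp: P_def N_def)
  have QN: "Q \<subseteq> N" by (auto simp: Q_def N_def)
  have pa: "p \<le> a" unfolding p_def a_def using PZN assms(3) by (intro card_mono) auto
  have qb: "q \<le> b" unfolding q_def b_def N_def using QN assms(3) by (intro card_mono) (auto simp: N_def)
  have NZ: "N \<subseteq> Z" by (auto simp: N_def)
  have zab: "card Z = a + b"
  proof -
    have "card (Z - N) = card Z - card N" by (rule card_Diff_subset) (use NZ assms(3) in \<open>auto intro: finite_subset\<close>)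
    moreover have "card N \<le> card Z" using NZ assms(3) by (rule card_mono[rotated])
    ultimately show ?thesis by (simp add: a_def b_def)
  qed
  have inSV: "Ctr \<in> SV" "\<And>i. i < k \<Longrightarrow> OutL i \<in> SV" "\<And>i. i < l \<Longrightarrow> InL i \<in> SV"
    by (auto simp: SV_def star_verts_def)
  have inL: "\<And>i. i < k \<Longrightarrow> OutL i \<in> star_leaves k l" "\<And>i. i < l \<Longrightarrow> InL i \<in> star_leaves k l"
    by (auto simp: star_leaves_def)
  have VPi: "phi \<in> Pi\<^sub>E SV Bf" if "phi \<in> Valid" for phi
  proof -
    from that have ph: "phi \<in> SV \<rightarrow>\<^sub>E V" "phi Ctr = v" "star_iso k l E phi" "phi ` star_leaves k l \<subseteq> Z"
      by (auto simp: Valid_def SV_def)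
    have arc: "\<And>x y. x \<in> SV \<Longrightarrow> y \<in> SV \<Longrightarrow> (phi x, phi y) \<in> E \<longleftrightarrow> star_arc k l x y"
      using ph(3) by (auto simp: star_iso_def SV_def)
    have "phi s \<in> Bf s" if s: "s \<in> SV" for s
    proof (cases s)
      case Ctr then show ?thesis using ph(2) by (simp add: Bf_def)
    next
      case (OutL i)
      then have i: "i < k" using s by (auto simp: SV_def star_verts_def)
      have "phi (OutL i) \<in> Z" using ph(4) inL(1)[OF i] by blast
      moreover have "(v, phi (OutL i)) \<in> E" using arc[OF inSV(1) inSV(2)[OF i]] ph(2) i by (simp add: star_arc_def)
      moreover have "(phi (OutL i), v) \<notin> E" using arc[OF inSV(2)[OF i] inSV(1)] ph(2) by (simp add: star_arc_def)
      ultimately show ?thesis using OutL by (simp add: Bf_def P_def)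
    next
      case (InL i)
      then have i: "i < l" using s by (auto simp: SV_def star_verts_def)
      have "phi (InL i) \<in> Z" using ph(4) inL(2)[OF i] by blast
      moreover have "(phi (InL i), v) \<in> E" using arc[OF inSV(3)[OF i] inSV(1)] ph(2) i by (simp add: star_arc_def)
      moreover have "(v, phi (InL i)) \<notin> E" using arc[OF inSV(1) inSV(3)[OF i]] ph(2) by (simp add: star_arc_def)
      ultimately show ?thesis using InL by (simp add: Bf_def Q_def)
    qed
    then show ?thesis using ph(1) by (auto simp: PiE_iff)
  qed
  have VNA: "(phi s, phi t) \<in> NA" if "phi \<in> Valid" "s \<in> star_leaves k l" "t \<in> star_leaves k l" "s \<noteq> t" for phi s t
  proof -
    from that have ph: "phi \<in> SV \<rightarrow>\<^sub>E V" "phi Ctr = v" "star_iso k l E phi" "phi ` star_leaves k l \<subseteq> Z"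
      by (auto simp: Valid_def SV_def)
    have LS: "star_leaves k l \<subseteq> SV" by (auto simp: star_leaves_def SV_def star_verts_def)
    have arc: "\<And>x y. x \<in> SV \<Longrightarrow> y \<in> SV \<Longrightarrow> (phi x, phi y) \<in> E \<longleftrightarrow> star_arc k l x y"
      and inj: "inj_on phi SV"
      using ph(3) by (auto simp: star_iso_def SV_def)
    have nc: "\<not> star_arc k l x y" if "x \<in> star_leaves k l" "y \<in> star_leaves k l" for x y
      using that by (auto simp: star_arc_def star_leaves_def)
    have "phi s \<noteq> phi t" using inj that(2-4) LS by (meson inj_on_def subsetD)
    moreover have "(phi s, phi t) \<notin> E" using arc[of s t] nc[of s t] that(2,3) LS by blast
    moreover have "(phi t, phi s) \<notin> E" using arc[of t s] nc[of t s] that(2,3) LS by blast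
    moreover have "phi s \<in> Z" "phi t \<in> Z" using ph(4) that(2,3) by blast+
    ultimately show ?thesis by (simp add: NA_def)
  qed
  have prodSV: "(\<Prod>s\<in>SV. card (Bf s)) = p ^ k * q ^ l"
    unfolding SV_def prod_star by (simp add: Bf_def p_def q_def)
  have VsubPi: "Valid \<subseteq> Pi\<^sub>E SV Bf" using VPi by blast
  have finPi: "finite (Pi\<^sub>E SV Bf)" using finSV finB by (intro finite_PiE) auto
  have finValid: "finite Valid" using VsubPi finPi finite_subset by blast
  obtain k' where k': "k = k' + 2" using assms(1) by (metis add.commute le_Suc_ex)
  obtain l' where l': "l = l' + 2" using assms(2) by (metis add.commute le_Suc_ex)
  show ?thesis
  proof (cases "p = 0 \<or> q = 0")
    case True
    have "Pi\<^sub>E SV Bf = {}"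
    proof (rule ccontr)
      assume "Pi\<^sub>E SV Bf \<noteq> {}"
      then obtain f where f: "f \<in> Pi\<^sub>E SV Bf" by blast
      have "f (OutL 0) \<in> P" using f inSV(2)[of 0] assms(1) by (auto simp: PiE_iff Bf_def)
      moreover have "f (InL 0) \<in> Q" using f inSV(3)[of 0] assms(2) by (auto simp: PiE_iff Bf_def)
      ultimately have "P \<noteq> {}" "Q \<noteq> {}" by auto
      moreover have "finite P" "finite Q" using assms(3) by (auto simp: P_def Q_def)
      ultimately show False using True by (simp add: p_def q_def)
    qed
    then have "Valid = {}" using VsubPi by blast
    then show ?thesis by simp
  next
    case False
    then have pq: "p > 0" "q > 0" by auto
    have O01: "OutL 0 \<in> SV" "OutL 1 \<in> SV" "OutL 0 \<noteq> OutL 1" using inSV(2) assms(1) by auto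
    have I01: "InL 0 \<in> SV" "InL 1 \<in> SV" "InL 0 \<noteq> InL 1" using inSV(3) assms(2) by auto
    have OI: "OutL 0 \<noteq> InL 0" by simp
    have L01: "OutL 0 \<in> star_leaves k l" "OutL 1 \<in> star_leaves k l" "InL 0 \<in> star_leaves k l" "InL 1 \<in> star_leaves k l"
      using inL assms(1,2) by auto
    have VB: "phi s \<in> Bf s" if "phi \<in> Valid" "s \<in> SV" for phi s
      using VPi[OF that(1)] that(2) by (rule PiE_mem)
    have gen: "card Valid \<le> card R * (\<Prod>i\<in>SV - {x, y}. card (Bf i))"
      if xy: "x \<in> SV" "y \<in> SV" "x \<noteq> y" and R: "R \<subseteq> Bf x \<times> Bf y"
        and VR: "\<And>phi. phi \<in> Valid \<Longrightarrow> (phi x, phi y) \<in> R" for x y R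
    proof -
      have "Valid \<subseteq> {f \<in> Pi\<^sub>E SV Bf. (f x, f y) \<in> R}" using VPi VR by blast
      moreover have "finite {f \<in> Pi\<^sub>E SV Bf. (f x, f y) \<in> R}" using finPi by simp
      ultimately have "card Valid \<le> card {f \<in> Pi\<^sub>E SV Bf. (f x, f y) \<in> R}" by (rule card_mono[rotated])
      also have "\<dots> \<le> card R * (\<Prod>i\<in>SV - {x, y}. card (Bf i))"
        by (rule pair_count[OF finSV _ xy R]) (rule finB)
      finally show ?thesis .
    qed
    have pr: "(\<Prod>i\<in>SV - {x, y}. card (Bf i)) = r"
      if xy: "x \<in> SV" "y \<in> SV" "x \<noteq> y" and eq: "card (Bf x) * card (Bf y) * r = p ^ k * q ^ l"
        and pos: "card (Bf x) * card (Bf y) > 0" for x y r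
    proof -
      have "card (Bf x) * card (Bf y) * (\<Prod>i\<in>SV - {x, y}. card (Bf i)) = card (Bf x) * card (Bf y) * r"
        using prod_remove2[OF finSV xy, of "\<lambda>i. card (Bf i)"] prodSV eq by metis
      thus ?thesis using pos by (metis mult_left_cancel not_gr0)
    qed
    define n1 where "n1 = card (NA \<inter> P \<times> P)"
    define n2 where "n2 = card (NA \<inter> Q \<times> Q)"
    define n3 where "n3 = card (NA \<inter> P \<times> Q)"
    have c1: "card Valid \<le> n1 * (p ^ k' * q ^ l)"
    proof -
      have "card Valid \<le> n1 * (\<Prod>i\<in>SV - {OutL 0, OutL 1}. card (Bf i))"
        unfolding n1_def
      proof (rule gen[OF O01])
        show "NA \<inter> P \<times> P \<subseteq> Bf (OutL 0) \<times> Bf (OutL 1)" by (simp add: Bf_def)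
        fix phi assume ph: "phi \<in> Valid"
        show "(phi (OutL 0), phi (OutL 1)) \<in> NA \<inter> P \<times> P"
          using VNA[OF ph L01(1,2)] VB[OF ph O01(1)] VB[OF ph O01(2)] by (simp add: Bf_def)
      qed
      also have "(\<Prod>i\<in>SV - {OutL 0, OutL 1}. card (Bf i)) = p ^ k' * q ^ l"
        by (rule pr[OF O01]) (use pq in \<open>simp_all add: Bf_def p_def k'\<close>)
      finally show ?thesis .
    qed
    have c2: "card Valid \<le> n2 * (p ^ k * q ^ l')"
    proof -
      have "card Valid \<le> n2 * (\<Prod>i\<in>SV - {InL 0, InL 1}. card (Bf i))"
        unfolding n2_def
      proof (rule gen[OF I01])
        show "NA \<inter> Q \<times> Q \<subseteq> Bf (InL 0) \<times> Bf (InL 1)" by (simp add: Bf_def)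
        fix phi assume ph: "phi \<in> Valid"
        show "(phi (InL 0), phi (InL 1)) \<in> NA \<inter> Q \<times> Q"
          using VNA[OF ph L01(3,4)] VB[OF ph I01(1)] VB[OF ph I01(2)] by (simp add: Bf_def)
      qed
      also have "(\<Prod>i\<in>SV - {InL 0, InL 1}. card (Bf i)) = p ^ k * q ^ l'"
        by (rule pr[OF I01]) (use pq in \<open>simp_all add: Bf_def q_def l'\<close>)
      finally show ?thesis .
    qed
    have OI': "OutL 0 \<in> SV" "InL 0 \<in> SV" "OutL 0 \<noteq> InL 0" using O01 I01 by auto
    have c3: "card Valid \<le> n3 * (p ^ (k' + 1) * q ^ (l' + 1))"
    proof -
      have "card Valid \<le> n3 * (\<Prod>i\<in>SV - {OutL 0, InL 0}. card (Bf i))"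
        unfolding n3_def
      proof (rule gen[OF OI'])
        show "NA \<inter> P \<times> Q \<subseteq> Bf (OutL 0) \<times> Bf (InL 0)" by (simp add: Bf_def)
        fix phi assume ph: "phi \<in> Valid"
        show "(phi (OutL 0), phi (InL 0)) \<in> NA \<inter> P \<times> Q"
          using VNA[OF ph L01(1,3)] VB[OF ph OI'(1)] VB[OF ph OI'(2)] by (simp add: Bf_def)
      qed
      also have "(\<Prod>i\<in>SV - {OutL 0, InL 0}. card (Bf i)) = p ^ (k' + 1) * q ^ (l' + 1)"
        by (rule pr[OF OI']) (use pq in \<open>simp_all add: Bf_def p_def q_def k' l'\<close>)
      finally show ?thesis .
    qed
    have finNA: "finite NA"
    proof -
      have "NA \<subseteq> Z \<times> Z" by (auto simp: NA_def)
      thus ?thesis using assms(3) finite_subset finite_cartesian_product by blast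
    qed
    have PQ: "P \<inter> Q = {}" by (auto simp: P_def Q_def)
    have n4: "card (NA \<inter> Q \<times> P) = n3"
    proof -
      have "NA \<inter> Q \<times> P = prod.swap ` (NA \<inter> P \<times> Q)"
      proof
        show "NA \<inter> Q \<times> P \<subseteq> prod.swap ` (NA \<inter> P \<times> Q)"
        proof
          fix t assume t: "t \<in> NA \<inter> Q \<times> P"
          then obtain x y where xy: "t = (x, y)" by (cases t)
          have "(y, x) \<in> NA \<inter> P \<times> Q" using t xy by (auto simp: NA_def)
          moreover have "t = prod.swap (y, x)" using xy by simp
          ultimately show "t \<in> prod.swap ` (NA \<inter> P \<times> Q)" by blast
        qed
      qed (auto simp: NA_def)
      moreover have "inj_on prod.swap (NA \<inter> P \<times> Q)" by (metis inj_on_def swap_swap)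
      ultimately show ?thesis by (simp add: n3_def card_image)
    qed
    have W: "n1 + n2 + 2 * n3 \<le> card NA"
    proof -
      let ?A1 = "NA \<inter> P \<times> P" and ?A2 = "NA \<inter> Q \<times> Q" and ?A3 = "NA \<inter> P \<times> Q" and ?A4 = "NA \<inter> Q \<times> P"
      have fins: "finite ?A1" "finite ?A2" "finite ?A3" "finite ?A4" using finNA by auto
      have "card (?A1 \<union> ?A2 \<union> ?A3 \<union> ?A4) = card (?A1 \<union> ?A2 \<union> ?A3) + card ?A4"
        by (rule card_Un_disjoint) (use fins PQ in auto)
      moreover have "card (?A1 \<union> ?A2 \<union> ?A3) = card (?A1 \<union> ?A2) + card ?A3"
        by (rule card_Un_disjoint) (use fins PQ in auto)
      moreover have "card (?A1 \<union> ?A2) = card ?A1 + card ?A2"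
        by (rule card_Un_disjoint) (use fins PQ in auto)
      moreover have "card (?A1 \<union> ?A2 \<union> ?A3 \<union> ?A4) \<le> card NA"
        by (rule card_mono[OF finNA]) auto
      ultimately show ?thesis using n4 by (simp add: n1_def n2_def n3_def)
    qed
    have pk: "p ^ j \<le> a ^ j" for j by (rule power_mono[OF pa]) simp
    have qk: "q ^ j \<le> b ^ j" for j by (rule power_mono[OF qb]) simp
    let ?T = "a ^ k * b ^ l"
    have f1: "card Valid * (a * a) \<le> n1 * ?T"
    proof -
      have "card Valid * (a * a) \<le> n1 * (p ^ k' * q ^ l) * (a * a)" using c1 by (rule mult_right_mono) simp
      also have "\<dots> \<le> n1 * (a ^ k' * b ^ l) * (a * a)" using pk qk by (intro mult_mono) auto
      also have "\<dots> = n1 * ?T" by (simp add: k' power_add mult_ac power2_eq_square)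
      finally show ?thesis .
    qed
    have f2: "card Valid * (b * b) \<le> n2 * ?T"
    proof -
      have "card Valid * (b * b) \<le> n2 * (p ^ k * q ^ l') * (b * b)" using c2 by (rule mult_right_mono) simp
      also have "\<dots> \<le> n2 * (a ^ k * b ^ l') * (b * b)" using pk qk by (intro mult_mono) auto
      also have "\<dots> = n2 * ?T" by (simp add: l' power_add mult_ac power2_eq_square)
      finally show ?thesis .
    qed
    have f3: "card Valid * (a * b) \<le> n3 * ?T"
    proof -
      have "card Valid * (a * b) \<le> n3 * (p ^ (k' + 1) * q ^ (l' + 1)) * (a * b)" using c3 by (rule mult_right_mono) simp
      also have "\<dots> \<le> n3 * (a ^ (k' + 1) * b ^ (l' + 1)) * (a * b)"
        using mult_le_mono[OF pk[of "k' + 1"] qk[of "l' + 1"]] by (intro mult_right_mono mult_left_mono) auto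
      also have "\<dots> = n3 * ?T" by (simp add: k' l' power_add mult_ac power2_eq_square)
      finally show ?thesis .
    qed
    have "card Valid * card Z ^ 2 = card Valid * (a * a) + card Valid * (b * b) + 2 * (card Valid * (a * b))"
      by (simp add: zab power2_eq_square algebra_simps)
    also have "\<dots> \<le> n1 * ?T + n2 * ?T + 2 * (n3 * ?T)" using f1 f2 f3 by linarith
    also have "\<dots> = (n1 + n2 + 2 * n3) * ?T" by (simp add: algebra_simps)
    also have "\<dots> \<le> card NA * ?T" using W by (rule mult_right_mono) simp
    finally show ?thesis by (simp add: a_def b_def mult_ac)
  qed
qed


lemma two_choose2: "2 * (z choose 2) = z * (z - 1)"
  by (induction z) (auto simp: choose_two)

theorem lemma4:
  fixes k l :: nat and V :: "'a set" and E :: "('a \<times> 'a) set" and Z :: "'a set" and v :: 'a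
  assumes "k \<ge> l" "l \<ge> 2" "k + l \<ge> 6"
    and "digraph V E"
    and "Z \<subseteq> V" "card Z \<ge> 2"
    and "v \<in> V" "v \<notin> Z"
  shows "cond_prob k l V E Z v
           \<le> (1 - density E Z) * (mu V Z - rho_in V E Z v) ^ k * (rho_in V E Z v) ^ l
         \<and> (1 - density E Z) * (mu V Z - rho_in V E Z v) ^ k * (rho_in V E Z v) ^ l
           \<le> (1 - density E Z) * lambda0 k l * mu V Z ^ (k + l)"
proof -
  have finV: "finite V" using assms(4) by (simp add: digraph_def)
  have finZ: "finite Z" using finV assms(5) finite_subset by blast
  define n where "n = card V"
  have npos: "n > 0" using finV assms(7) by (auto simp: n_def card_gt_0_iff)
  define N where "N = {u \<in> Z. (u, v) \<in> E}"
  define Valid where "Valid = {phi \<in> star_verts k l \<rightarrow>\<^sub>E V. phi Ctr = v \<and> star_iso k l E phi \<and> phi ` star_leaves k l \<subseteq> Z}"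
  define NA where "NA = {(x, y) \<in> Z \<times> Z. x \<noteq> y \<and> (x, y) \<notin> E \<and> (y, x) \<notin> E}"
  define AD where "AD = {(x, y) \<in> Z \<times> Z. x \<noteq> y \<and> ((x, y) \<in> E \<or> (y, x) \<in> E)}"
  define U where "U = {{x, y} | x y. x \<in> Z \<and> y \<in> Z \<and> x \<noteq> y \<and> ((x, y) \<in> E \<or> (y, x) \<in> E)}"
  define z where "z = card Z"
  define a where "a = card (Z - N)"
  define b where "b = card N"
  have k2: "k \<ge> 2" using assms by linarith
  have main: "card Valid * z ^ 2 \<le> a ^ k * b ^ l * card NA"
    unfolding z_def a_def b_def N_def Valid_def NA_def
    by (rule main_count[OF k2 assms(2) finZ assms(8)])
  have NZ: "N \<subseteq> Z" by (auto simp: N_def)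
  have zab: "z = a + b"
  proof -
    have "finite N" using finZ NZ finite_subset by blast
    then have "card (Z - N) = card Z - card N" using NZ by (rule card_Diff_subset)
    moreover have "card N \<le> card Z" using NZ finZ by (rule card_mono[rotated])
    ultimately show ?thesis by (simp add: a_def b_def z_def)
  qed
  have adj: "2 * card U \<le> card AD" unfolding U_def AD_def by (rule adj_count[OF finZ])
  have part: "card NA + card AD = z * z - z"
  proof -
    have "NA \<union> AD = {(x, y) \<in> Z \<times> Z. x \<noteq> y}" by (auto simp: NA_def AD_def)
    moreover have "NA \<inter> AD = {}" by (auto simp: NA_def AD_def)
    moreover have "finite NA" "finite AD"
    proof -
      have "NA \<subseteq> Z \<times> Z" "AD \<subseteq> Z \<times> Z" by (auto simp: NA_def AD_def)
      thus "finite NA" "finite AD" using finZ finite_subset finite_cartesian_product by blast+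
    qed
    ultimately show ?thesis using card_Un_disjoint[of NA AD] offdiag_card[OF finZ] by (simp add: z_def)
  qed
  have z2: "z \<ge> 2" using assms(6) by (simp add: z_def)
  have ch: "2 * real (z choose 2) = real z * (real z - 1)"
  proof -
    have "2 * (z choose 2) = z * (z - 1)" by (rule two_choose2)
    hence "real (2 * (z choose 2)) = real (z * (z - 1))" by simp
    thus ?thesis using z2 by (simp add: of_nat_diff)
  qed
  have dens: "density E Z = real (card U) / real (z choose 2)"
    unfolding density_def U_def z_def by (rule refl)
  have zz: "real z * (real z - 1) > 0"
  proof -
    have "real z \<ge> 2" using z2 by simp
    thus ?thesis by (intro mult_pos_pos) auto
  qed
  define Y where "Y = real z * (real z - 1)"
  have Ypos: "Y > 0" using zz by (simp add: Y_def)
  have c_eq: "real (z choose 2) = Y / 2" using ch by (simp add: Y_def)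
  have onemd: "1 - density E Z = (Y - 2 * real (card U)) / Y"
  proof -
    have "density E Z = real (card U) / (Y / 2)" by (simp only: dens c_eq)
    also have "\<dots> = 2 * real (card U) / Y" by simp
    finally have "1 - density E Z = 1 - 2 * real (card U) / Y" by simp
    also have "\<dots> = (Y - 2 * real (card U)) / Y" using Ypos by (simp add: diff_divide_distrib)
    finally show ?thesis .
  qed
  have NAle: "real (card NA) \<le> Y - 2 * real (card U)"
  proof -
    have "card NA + 2 * card U \<le> z * z - z" using adj part by linarith
    hence "real (card NA + 2 * card U) \<le> real (z * z - z)" by (simp only: of_nat_le_iff)
    moreover have "real (z * z - z) = Y" using z2 unfolding Y_def by (simp add: of_nat_diff algebra_simps)
    ultimately show ?thesis by simp
  qed
  have md_nonneg: "1 - density E Z \<ge> 0"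
    unfolding onemd using NAle Ypos by (intro divide_nonneg_pos) auto
  have md_ge: "1 - density E Z \<ge> real (card NA) / (real z) ^ 2"
  proof -
    have "Y \<le> (real z) ^ 2" unfolding Y_def by (simp add: power2_eq_square algebra_simps)
    moreover have zsq: "(real z) ^ 2 > 0" using z2 by simp
    ultimately have "real (card NA) / (real z) ^ 2 \<le> real (card NA) / Y"
      using Ypos mult_pos_pos[OF zsq Ypos] by (intro divide_left_mono) auto
    also have "\<dots> \<le> 1 - density E Z" unfolding onemd using NAle Ypos by (intro divide_right_mono) auto
    finally show ?thesis .
  qed
  define T where "T = real a ^ k * real b ^ l"
  have Tnn: "T \<ge> 0" by (simp add: T_def)
  have Cle: "real (card Valid) \<le> (1 - density E Z) * T"
  proof -
    have "real (card Valid) * (real z) ^ 2 \<le> T * real (card NA)"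
      using main unfolding T_def by (metis of_nat_le_iff of_nat_mult of_nat_power)
    hence "real (card Valid) \<le> T * (real (card NA) / (real z) ^ 2)" using z2 by (simp add: field_simps)
    also have "\<dots> \<le> T * (1 - density E Z)" using md_ge Tnn by (rule mult_left_mono)
    finally show ?thesis by (simp add: mult_ac)
  qed
  define B' where "B' = (\<lambda>s. case s of Ctr \<Rightarrow> {v} | OutL i \<Rightarrow> V | InL i \<Rightarrow> V)"
  have Ctr_in: "Ctr \<in> star_verts k l" by (simp add: star_verts_def)
  have Deq: "{phi \<in> star_verts k l \<rightarrow>\<^sub>E V. phi Ctr = v} = Pi\<^sub>E (star_verts k l) B'"
  proof
    show "{phi \<in> star_verts k l \<rightarrow>\<^sub>E V. phi Ctr = v} \<subseteq> Pi\<^sub>E (star_verts k l) B'"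
    proof
      fix phi assume "phi \<in> {phi \<in> star_verts k l \<rightarrow>\<^sub>E V. phi Ctr = v}"
      then have ph: "phi \<in> star_verts k l \<rightarrow>\<^sub>E V" "phi Ctr = v" by auto
      have "phi s \<in> B' s" if "s \<in> star_verts k l" for s
        using ph that by (cases s) (auto simp: B'_def PiE_iff)
      thus "phi \<in> Pi\<^sub>E (star_verts k l) B'" using ph(1) by (auto simp: PiE_iff)
    qed
  next
    show "Pi\<^sub>E (star_verts k l) B' \<subseteq> {phi \<in> star_verts k l \<rightarrow>\<^sub>E V. phi Ctr = v}"
    proof
      fix phi assume ph: "phi \<in> Pi\<^sub>E (star_verts k l) B'"
      have "phi s \<in> V" if "s \<in> star_verts k l" for s
        using PiE_mem[OF ph that] assms(7) by (cases s) (auto simp: B'_def)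
      moreover have "phi Ctr = v" using PiE_mem[OF ph Ctr_in] by (simp add: B'_def)
      ultimately show "phi \<in> {phi \<in> star_verts k l \<rightarrow>\<^sub>E V. phi Ctr = v}" using ph by (auto simp: PiE_iff)
    qed
  qed
  have Dcard: "card {phi \<in> star_verts k l \<rightarrow>\<^sub>E V. phi Ctr = v} = n ^ (k + l)"
  proof -
    have "card (Pi\<^sub>E (star_verts k l) B') = (\<Prod>s\<in>star_verts k l. card (B' s))"
      by (rule card_PiE) (simp add: star_verts_def)
    also have "\<dots> = n ^ (k + l)" unfolding prod_star by (simp add: B'_def n_def power_add)
    finally show ?thesis using Deq by simp
  qed
  have cp: "cond_prob k l V E Z v = real (card Valid) / real n ^ (k + l)"
    unfolding cond_prob_def Dcard Valid_def by simp
  have rho: "rho_in V E Z v = real b / real n" by (simp add: rho_in_def b_def N_def n_def)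
  have mr: "mu V Z - rho_in V E Z v = real a / real n"
    unfolding rho by (simp add: mu_def n_def z_def[symmetric] zab add_divide_distrib)
  have muz: "mu V Z = real a / real n + real b / real n" by (simp add: mu_def n_def z_def[symmetric] zab add_divide_distrib)
  have goal1: "cond_prob k l V E Z v
           \<le> (1 - density E Z) * (mu V Z - rho_in V E Z v) ^ k * (rho_in V E Z v) ^ l"
  proof -
    have "(1 - density E Z) * (mu V Z - rho_in V E Z v) ^ k * (rho_in V E Z v) ^ l
        = (1 - density E Z) * T / real n ^ (k + l)"
      unfolding mr unfolding rho T_def by (simp add: power_divide power_add mult_ac)
    moreover have "real (card Valid) / real n ^ (k + l) \<le> (1 - density E Z) * T / real n ^ (k + l)"
      using Cle npos by (intro divide_right_mono) auto
    ultimately show ?thesis unfolding cp by simp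
  qed
  have goal2: "(1 - density E Z) * (mu V Z - rho_in V E Z v) ^ k * (rho_in V E Z v) ^ l
           \<le> (1 - density E Z) * lambda0 k l * mu V Z ^ (k + l)"
  proof -
    have "(real a / real n) ^ k * (real b / real n) ^ l \<le> real k ^ k * real l ^ l / real (k + l) ^ (k + l) * (real a / real n + real b / real n) ^ (k + l)"
      using k2 assms(2) by (intro amgm2) auto
    hence "(mu V Z - rho_in V E Z v) ^ k * (rho_in V E Z v) ^ l \<le> lambda0 k l * mu V Z ^ (k + l)"
      unfolding mr rho muz lambda0_def by simp
    hence "(1 - density E Z) * ((mu V Z - rho_in V E Z v) ^ k * (rho_in V E Z v) ^ l) \<le> (1 - density E Z) * (lambda0 k l * mu V Z ^ (k + l))"
      using md_nonneg by (rule mult_left_mono)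
    thus ?thesis by (simp add: mult_ac)
  qed
  show ?thesis using goal1 goal2 by blast
qed

end
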